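(* Let $G$ be a finite group and $x\in G$. If $C_G(x)$ is a maximal centralizer in $G$, then $\beta_G(x)\cup Z(G)$ is a subgroup of $G$.
   Context: For a finite group $G$, $C_G(x)$ denotes the centralizer of $x\in G$ and $Z(G)$ the center. $\beta_G(x)=\{y\in G\mid C_G(y)=C_G(x)\}$. A centralizer $C_G(x)$ is called maximal if it is not contained in any other proper centralizer of $G$ (i.e. there is no $y\in G$ with $C_G(x)\subsetneq C_G(y)\neq G$). *)

theory Defs
  imports "HOL-Algebra.Algebra"
begin

definition centralizer :: "('a, 'b) monoid_scheme \<Rightarrow> 'a \<Rightarrow> 'a set" where
  "centralizer G x = {y \<in> carrier G. y \<otimes>\<^bsub>G\<^esub> x = x \<otimes>\<^bsub>G\<^esub> y}"

definition group_center :: "('a, 'b) monoid_scheme \<Rightarrow> 'a set" where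
  "group_center G = {z \<in> carrier G. \<forall>y \<in> carrier G. z \<otimes>\<^bsub>G\<^esub> y = y \<otimes>\<^bsub>G\<^esub> z}"

definition beta :: "('a, 'b) monoid_scheme \<Rightarrow> 'a \<Rightarrow> 'a set" where
  "beta G x = {y \<in> carrier G. centralizer G y = centralizer G x}"

definition maximal_centralizer :: "('a, 'b) monoid_scheme \<Rightarrow> 'a \<Rightarrow> bool" where
  "maximal_centralizer G x \<longleftrightarrow>
     \<not> (\<exists>y \<in> carrier G. centralizer G x \<subset> centralizer G y \<and> centralizer G y \<noteq> carrier G)"

end

theory Submission
  imports Defs
begin

lemma cent_sub: "centralizer G a \<subseteq> carrier G"
  unfolding centralizer_def by auto

lemma center_iff:
  fixes G (structure)
  assumes "y \<in> carrier G"
  shows "y \<in> group_center G \<longleftrightarrow> centralizer G y = carrier G"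
proof
  assume "y \<in> group_center G"
  then show "centralizer G y = carrier G" unfolding group_center_def centralizer_def by auto
next
  assume h: "centralizer G y = carrier G"
  have "z \<otimes> y = y \<otimes> z" if "z \<in> carrier G" for z
    using that h unfolding centralizer_def by blast
  then show "y \<in> group_center G" using assms unfolding group_center_def by auto
qed

lemma comm_inv:
  fixes G (structure)
  assumes "group G" "a \<in> carrier G" "y \<in> carrier G" "y \<otimes> a = a \<otimes> y"
  shows "y \<otimes> inv a = inv a \<otimes> y"
proof -
  interpret group G by fact
  have "inv a \<otimes> y = inv a \<otimes> y \<otimes> (a \<otimes> inv a)" using assms by simp
  also have "\<dots> = inv a \<otimes> (y \<otimes> a) \<otimes> inv a" using assms(2,3) by (simp add: m_assoc)
  also have "\<dots> = inv a \<otimes> (a \<otimes> y) \<otimes> inv a" by (simp only: assms(4))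
  also have "\<dots> = y \<otimes> inv a" using assms(2,3) by (simp add: m_assoc[symmetric])
  finally show ?thesis by simp
qed

lemma cent_inv:
  fixes G (structure)
  assumes "group G" "a \<in> carrier G"
  shows "centralizer G (inv\<^bsub>G\<^esub> a) = centralizer G a"
proof -
  interpret group G by fact
  have "y \<otimes> inv a = inv a \<otimes> y \<longleftrightarrow> y \<otimes> a = a \<otimes> y" if "y \<in> carrier G" for y
  proof
    assume "y \<otimes> inv a = inv a \<otimes> y"
    then have "y \<otimes> inv (inv a) = inv (inv a) \<otimes> y"
      by (rule comm_inv[OF assms(1) inv_closed[OF assms(2)] that])
    then show "y \<otimes> a = a \<otimes> y" by (simp only: inv_inv[OF assms(2)])
  next
    assume "y \<otimes> a = a \<otimes> y"
    then show "y \<otimes> inv a = inv a \<otimes> y" by (rule comm_inv[OF assms(1) assms(2) that])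
  qed
  then show ?thesis unfolding centralizer_def by blast
qed

lemma cent_mult:
  fixes G (structure)
  assumes "group G" "a \<in> carrier G" "b \<in> carrier G"
  shows "centralizer G a \<inter> centralizer G b \<subseteq> centralizer G (a \<otimes>\<^bsub>G\<^esub> b)"
proof -
  interpret group G by fact
  show ?thesis unfolding centralizer_def
  proof (auto simp: assms)
    fix y assume y: "y \<in> carrier G" "y \<otimes> a = a \<otimes> y" "y \<otimes> b = b \<otimes> y"
    have "y \<otimes> (a \<otimes> b) = (y \<otimes> a) \<otimes> b" using y(1) assms by (simp add: m_assoc)
    also have "\<dots> = (a \<otimes> y) \<otimes> b" using y by simp
    also have "\<dots> = a \<otimes> (y \<otimes> b)" using y(1) assms by (simp add: m_assoc)
    also have "\<dots> = a \<otimes> (b \<otimes> y)" by (simp only: y(3))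
    also have "\<dots> = a \<otimes> b \<otimes> y" using y assms by (simp add: m_assoc)
    finally show "y \<otimes> (a \<otimes> b) = a \<otimes> b \<otimes> y" .
  qed
qed

lemma cent_mult_center:
  fixes G (structure)
  assumes "group G" "a \<in> group_center G" "b \<in> carrier G"
  shows "centralizer G (a \<otimes>\<^bsub>G\<^esub> b) = centralizer G b"
proof -
  interpret group G by fact
  have a: "a \<in> carrier G" "\<And>y. y \<in> carrier G \<Longrightarrow> a \<otimes> y = y \<otimes> a"
    using assms(2) unfolding group_center_def by auto
  have "y \<otimes> (a \<otimes> b) = a \<otimes> b \<otimes> y \<longleftrightarrow> y \<otimes> b = b \<otimes> y" if y: "y \<in> carrier G" for y
  proof -
    have "y \<otimes> (a \<otimes> b) = (y \<otimes> a) \<otimes> b" using a(1) y assms(3) by (simp only: m_assoc)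
    also have "\<dots> = (a \<otimes> y) \<otimes> b" by (simp only: a(2)[OF y])
    also have "\<dots> = a \<otimes> (y \<otimes> b)" using a(1) y assms(3) by (simp only: m_assoc)
    finally have 1: "y \<otimes> (a \<otimes> b) = a \<otimes> (y \<otimes> b)" .
    have 2: "a \<otimes> b \<otimes> y = a \<otimes> (b \<otimes> y)" using a(1) y assms(3) by (simp only: m_assoc)
    have 3: "a \<otimes> (y \<otimes> b) = a \<otimes> (b \<otimes> y) \<longleftrightarrow> y \<otimes> b = b \<otimes> y"
    proof -
      have u: "a \<in> Units G" using a(1) by (simp add: Units_eq)
      show ?thesis using Units_l_cancel[OF u m_closed[OF y assms(3)] m_closed[OF assms(3) y]] .
    qed
    show ?thesis unfolding 1 2 3 ..
  qed
  then show ?thesis unfolding centralizer_def using a(1) assms(3) by blast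
qed

theorem proposition3p2:
  fixes G (structure) and x
  assumes "group G" and "finite (carrier G)" and "x \<in> carrier G"
    and "maximal_centralizer G x"
  shows "subgroup (beta G x \<union> group_center G) G"
proof -
  interpret group G by fact
  let ?S = "beta G x \<union> group_center G"
  have Zc: "group_center G \<subseteq> carrier G" unfolding group_center_def by auto
  have Bc: "beta G x \<subseteq> carrier G" unfolding beta_def by auto
  have mem: "y \<in> ?S \<longleftrightarrow> y \<in> carrier G \<and> (centralizer G y = centralizer G x \<or> centralizer G y = carrier G)" for y
    using center_iff[of y G] Zc unfolding beta_def by auto
  show ?thesis
  proof (rule subgroupI)
    show "?S \<subseteq> carrier G" using Zc Bc by auto
    show "?S \<noteq> {}" using assms(3) unfolding beta_def by auto
  next
    fix a assume "a \<in> ?S"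
    then show "inv a \<in> ?S" using mem cent_inv[OF assms(1)] by auto
  next
    fix a b assume a: "a \<in> ?S" and b: "b \<in> ?S"
    have ac: "a \<in> carrier G" and bc: "b \<in> carrier G" using a b mem by auto
    show "a \<otimes> b \<in> ?S"
    proof (cases "a \<in> group_center G")
      case True
      then show ?thesis using cent_mult_center[OF assms(1) True bc] b mem ac bc by auto
    next
      case False
      then have ca: "centralizer G a = centralizer G x" using a mem ac center_iff[OF ac] by auto
      show ?thesis
      proof (cases "b \<in> group_center G")
        case True
        have "a \<otimes> b = b \<otimes> a" using True ac unfolding group_center_def by auto
        then show ?thesis using cent_mult_center[OF assms(1) True ac] a mem ac bc by auto
      next
        case False
        then have cb: "centralizer G b = centralizer G x" using b mem bc center_iff[OF bc] by auto
        have sub: "centralizer G x \<subseteq> centralizer G (a \<otimes> b)"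
          using cent_mult[OF assms(1) ac bc] ca cb by auto
        have "centralizer G (a \<otimes> b) = centralizer G x \<or> centralizer G (a \<otimes> b) = carrier G"
          using assms(4) sub m_closed[OF ac bc] unfolding maximal_centralizer_def by blast
        then show ?thesis using mem ac bc by auto
      qed
    qed
  qed
qed

end
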